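(* Let $T\in\mathbb{T}$ have a positive weight on each edge, and let $A$ be its adjacency matrix. Then there exists a signature matrix $S$ such that $SA^{\#}S$ is a nonnegative matrix.
   Context: $\mathbb{T}$ is the class of simple undirected weighted trees $T$ such that (i) $T$ has at least one non-pendant vertex, and (ii) every non-pendant vertex of $T$ is adjacent to at least one pendant vertex (a vertex of degree one). The adjacency matrix $A$ has $(i,j)$ entry equal to the weight of edge $v_iv_j$, or $0$ if no edge; $A^{\#}$ is its group inverse (unique $X$ with $AXA=A$, $XAX=X$, $AX=XA$). A signature matrix is a diagonal matrix with diagonal entries in $\{1,-1\}$. *)

theory Defs
  imports "HOL-Analysis.Analysis"
begin

text \<open>A weighted simple undirected graph on the finite vertex type 'n is given by its
  (real) adjacency matrix A: vertices i, j are adjacent iff A$i$j \<noteq> 0, the weight of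
  the edge being A$i$j.\<close>

definition adj :: "real^'n^'n \<Rightarrow> 'n \<Rightarrow> 'n \<Rightarrow> bool" where
  "adj A i j \<longleftrightarrow> A $ i $ j \<noteq> 0"

definition weighted_simple_graph :: "real^'n^'n \<Rightarrow> bool" where
  "weighted_simple_graph A \<longleftrightarrow> (\<forall>i j. A $ i $ j = A $ j $ i) \<and> (\<forall>i. A $ i $ i = 0)"

definition graph_connected :: "real^'n^'n \<Rightarrow> bool" where
  "graph_connected A \<longleftrightarrow> (\<forall>i j. (adj A)\<^sup>*\<^sup>* i j)"

definition is_cycle :: "real^'n^'n \<Rightarrow> 'n list \<Rightarrow> bool" where
  "is_cycle A vs \<longleftrightarrow> length vs \<ge> 3 \<and> distinct vs \<and>
     (\<forall>k. Suc k < length vs \<longrightarrow> adj A (vs ! k) (vs ! Suc k)) \<and>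
     adj A (last vs) (hd vs)"

definition is_tree :: "real^'n^'n \<Rightarrow> bool" where
  "is_tree A \<longleftrightarrow> weighted_simple_graph A \<and> graph_connected A \<and> (\<nexists>vs. is_cycle A vs)"

definition degree :: "real^'n^'n \<Rightarrow> 'n \<Rightarrow> nat" where
  "degree A i = card {j. adj A i j}"

definition pendant :: "real^'n^'n \<Rightarrow> 'n \<Rightarrow> bool" where
  "pendant A i \<longleftrightarrow> degree A i = 1"

definition class_T :: "real^'n^'n \<Rightarrow> bool" where
  "class_T A \<longleftrightarrow> is_tree A \<and> (\<exists>i. \<not> pendant A i) \<and>
     (\<forall>i. \<not> pendant A i \<longrightarrow> (\<exists>j. adj A i j \<and> pendant A j))"

definition is_group_inverse :: "real^'n^'n \<Rightarrow> real^'n^'n \<Rightarrow> bool" where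
  "is_group_inverse A X \<longleftrightarrow> A ** X ** A = A \<and> X ** A ** X = X \<and> A ** X = X ** A"

definition group_inverse :: "real^'n^'n \<Rightarrow> real^'n^'n" where
  "group_inverse A = (THE X. is_group_inverse A X)"

definition signature_matrix :: "real^'n^'n \<Rightarrow> bool" where
  "signature_matrix S \<longleftrightarrow> (\<forall>i j. i \<noteq> j \<longrightarrow> S $ i $ j = 0) \<and> (\<forall>i. S $ i $ i = 1 \<or> S $ i $ i = -1)"

definition nonneg_matrix :: "real^'n^'n \<Rightarrow> bool" where
  "nonneg_matrix M \<longleftrightarrow> (\<forall>i j. M $ i $ j \<ge> 0)"

end

theory Submission
  imports Defs
begin


definition walk :: "('a \<Rightarrow> 'a \<Rightarrow> bool) \<Rightarrow> (nat \<Rightarrow> 'a) \<Rightarrow> nat \<Rightarrow> bool" where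
  "walk R f k \<longleftrightarrow> (\<forall>i<k. R (f i) (f (Suc i)))"

lemma odd_closed_walk_cycle:
  assumes irr: "\<And>x. \<not> adj A x x"
  shows "walk (adj A) f k \<Longrightarrow> f k = f 0 \<Longrightarrow> odd k \<Longrightarrow> \<exists>vs. is_cycle A vs"
proof (induction k arbitrary: f rule: less_induct)
  case (less k)
  note w = less.prems(1)[unfolded walk_def]
  show ?case
  proof (cases "distinct (map f [0..<k])")
    case True
    have "k \<noteq> 1"
    proof
      assume "k = 1"
      then have "adj A (f 0) (f 1)" using w by auto
      with less.prems(2) \<open>k = 1\<close> irr show False by simp
    qed
    with less.prems(3) have k3: "k \<ge> 3" by presburger
    have "is_cycle A (map f [0..<k])"
      unfolding is_cycle_def
    proof (intro conjI allI impI)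
      show "3 \<le> length (map f [0..<k])" using k3 by simp
      show "distinct (map f [0..<k])" by fact
      fix i assume "Suc i < length (map f [0..<k])"
      then show "adj A (map f [0..<k] ! i) (map f [0..<k] ! Suc i)" using w by simp
    next
      have "last (map f [0..<k]) = f (k - 1)" using k3 by (simp add: last_map)
      moreover have "hd (map f [0..<k]) = f 0" using k3 by (simp add: hd_map)
      moreover have "adj A (f (k-1)) (f k)" using w[rule_format, of "k-1"] k3 by simp
      ultimately show "adj A (last (map f [0..<k])) (hd (map f [0..<k]))"
        using less.prems(2) by simp
    qed
    then show ?thesis by blast
  next
    case False
    then obtain i j where ij: "i < k" "j < k" "i \<noteq> j" "f i = f j"
      by (auto simp: distinct_conv_nth)
    obtain a b where ab: "a < b" "b < k" "f a = f b"
      using ij by (metis linorder_neqE_nat)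
    define g1 where "g1 = (\<lambda>i. f (i + a))"
    define g2 where "g2 = (\<lambda>i. if i < a then f i else f (i + (b - a)))"
    have w1: "walk (adj A) g1 (b - a)" unfolding walk_def g1_def using w ab by auto
    have e1: "g1 (b - a) = g1 0" unfolding g1_def using ab by simp
    have w2: "walk (adj A) g2 (k - (b - a))" unfolding walk_def
    proof (intro allI impI)
      fix i assume i: "i < k - (b - a)"
      show "adj A (g2 i) (g2 (Suc i))"
      proof (cases "Suc i < a")
        case True then show ?thesis unfolding g2_def using w ab by auto
      next
        case F: False
        show ?thesis
        proof (cases "i < a")
          case True
          then have "Suc i = a" using F by simp
          then have "g2 (Suc i) = f b" "g2 i = f i" unfolding g2_def using ab True by auto
          moreover have "adj A (f i) (f a)"
          proof -
            have "i < k" using True ab by simp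
            then show ?thesis using w \<open>Suc i = a\<close> by auto
          qed
          ultimately show ?thesis using ab by simp
        next
          case False
          then have "g2 i = f (i + (b - a))" "g2 (Suc i) = f (Suc (i + (b - a)))"
            unfolding g2_def by auto
          moreover have "i + (b - a) < k" using i ab by simp
          ultimately show ?thesis using w by simp
        qed
      qed
    qed
    have e2: "g2 (k - (b - a)) = g2 0"
    proof -
      have "\<not> k - (b - a) < a" using ab by simp
      then have "g2 (k - (b - a)) = f (k - (b - a) + (b - a))" unfolding g2_def by simp
      also have "k - (b - a) + (b - a) = k" using ab by simp
      finally have 1: "g2 (k - (b - a)) = f 0" using less.prems(2) by simp
      show ?thesis
      proof (cases "a = 0")
        case True then show ?thesis using 1 ab unfolding g2_def by simp
      next
        case False then show ?thesis using 1 unfolding g2_def by simp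
      qed
    qed
    have kk: "k = (b - a) + (k - (b - a))" using ab by simp
    have "odd (b - a) \<or> odd (k - (b - a))"
    proof (rule ccontr)
      assume "\<not> (odd (b - a) \<or> odd (k - (b - a)))"
      then have "even ((b - a) + (k - (b - a)))" using even_add by blast
      with kk less.prems(3) show False by metis
    qed
    then show ?thesis
    proof
      assume "odd (b - a)"
      then show ?thesis using less.IH[OF _ w1 e1] ab by simp
    next
      assume "odd (k - (b - a))"
      then show ?thesis using less.IH[OF _ w2 e2] ab by simp
    qed
  qed
qed

lemma rtranclp_walk: "R\<^sup>*\<^sup>* x y \<Longrightarrow> \<exists>f k. walk R f k \<and> f 0 = x \<and> f k = y"
proof (induction rule: rtranclp_induct)
  case base
  show ?case by (rule exI[of _ "\<lambda>_. x"], rule exI[of _ 0]) (simp add: walk_def)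
next
  case (step y z)
  then obtain f k where f: "walk R f k" "f 0 = x" "f k = y" by blast
  define g where "g = (\<lambda>i. if i \<le> k then f i else z)"
  have "walk R g (Suc k)" unfolding walk_def g_def using f step(2)
    by (auto simp: walk_def less_Suc_eq)
  moreover have "g 0 = x" "g (Suc k) = z" using f unfolding g_def by auto
  ultimately show ?case by blast
qed

lemma walk_extend: "walk R f k \<Longrightarrow> R (f k) z \<Longrightarrow>
   walk R (\<lambda>i. if i \<le> k then f i else z) (Suc k)"
  by (auto simp: walk_def less_Suc_eq)

lemma walk_close:
  assumes sym: "\<And>x y. R x y \<Longrightarrow> R y x"
    and f: "walk R f k" and g: "walk R g m" and e: "f 0 = g 0" "f k = g m"
  shows "walk R (\<lambda>i. if i \<le> k then f i else g (k + m - i)) (k + m) \<and>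
         (\<lambda>i. if i \<le> k then f i else g (k + m - i)) (k + m) = (\<lambda>i. if i \<le> k then f i else g (k + m - i)) 0"
proof
  show "walk R (\<lambda>i. if i \<le> k then f i else g (k + m - i)) (k + m)"
    unfolding walk_def
  proof (intro allI impI)
    fix i assume i: "i < k + m"
    show "R (if i \<le> k then f i else g (k + m - i)) (if Suc i \<le> k then f (Suc i) else g (k + m - Suc i))"
    proof (cases "Suc i \<le> k")
      case True then show ?thesis using f by (simp add: walk_def)
    next
      case False
      define t where "t = k + m - Suc i"
      have t: "t < m" "Suc t = k + m - i" using i False unfolding t_def by auto
      have "R (g t) (g (Suc t))" using g t(1) unfolding walk_def by blast
      then have "R (g (k + m - i)) (g t)" using sym t(2) by metis
      moreover have "f i = g (k + m - i)" if "i \<le> k"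
      proof -
        from that False have "i = k" by simp
        then show ?thesis using e(2) by simp
      qed
      ultimately show ?thesis using False t_def by auto
    qed
  qed
  show "(\<lambda>i. if i \<le> k then f i else g (k + m - i)) (k + m) = (\<lambda>i. if i \<le> k then f i else g (k + m - i)) 0"
    using e by (cases "m = 0") auto
qed

lemma tree_bipartite:
  fixes A :: "real^'n^'n"
  assumes sym: "\<And>x y. adj A x y \<Longrightarrow> adj A y x"
    and irr: "\<And>x. \<not> adj A x x"
    and conn: "\<And>x y. (adj A)\<^sup>*\<^sup>* x y"
    and nocyc: "\<nexists>vs. is_cycle A vs"
  shows "\<exists>c::'n \<Rightarrow> bool. \<forall>u v. adj A u v \<longrightarrow> c u \<noteq> c v"
proof -
  fix r
  define c where "c v = (\<exists>f k. walk (adj A) f k \<and> f 0 = r \<and> f k = v \<and> even k)" for v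
  have noboth: False if "walk (adj A) f k" "walk (adj A) g m" "f 0 = r" "g 0 = r"
      "f k = v" "g m = v" "odd (k + m)" for f g k m v
  proof -
    have "f 0 = g 0" "f k = g m" using that by auto
    from walk_close[of "adj A", OF sym that(1,2) this] odd_closed_walk_cycle[OF irr] that(7) nocyc
    show False by blast
  qed
  have "c u \<noteq> c v" if uv: "adj A u v" for u v
  proof -
    obtain f k where f: "walk (adj A) f k" "f 0 = r" "f k = u"
      using rtranclp_walk[OF conn] by blast
    define f' where "f' = (\<lambda>i. if i \<le> k then f i else v)"
    have f': "walk (adj A) f' (Suc k)" "f' 0 = r" "f' (Suc k) = v"
      unfolding f'_def using walk_extend[OF f(1)] f uv by auto
    show ?thesis
    proof (cases "even k")
      case True
      then have "c u" unfolding c_def using f by blast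
      moreover have "\<not> c v"
      proof
        assume "c v"
        then obtain g m where g: "walk (adj A) g m" "g 0 = r" "g m = v" "even m"
          unfolding c_def by blast
        show False using noboth[OF f'(1) g(1) f'(2) g(2) f'(3) g(3)] True g(4) by simp
      qed
      ultimately show ?thesis by blast
    next
      case False
      have "\<not> c u"
      proof
        assume "c u"
        then obtain g m where g: "walk (adj A) g m" "g 0 = r" "g m = u" "even m"
          unfolding c_def by blast
        show False using noboth[OF f(1) g(1) f(2) g(2) f(3) g(3)] False g(4) by simp
      qed
      moreover have "c v"
      proof -
        have "even (Suc k)" using False by simp
        then show ?thesis unfolding c_def using f' by blast
      qed
      ultimately show ?thesis by blast
    qed
  qed
  then show ?thesis by blast
qed



lemma matrix_sub_ldistrib: "(A::'a::ring_1^'n^'m) ** (B - C) = A ** B - A ** C"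
  by (simp add: matrix_matrix_mult_def vec_eq_iff sum_subtractf algebra_simps)
lemma matrix_sub_rdistrib: "((B::'a::ring_1^'n^'m) - C) ** A = B ** A - C ** A"
  by (simp add: matrix_matrix_mult_def vec_eq_iff sum_subtractf algebra_simps)
lemma matrix_add_rdistrib': "((B::'a::ring_1^'n^'m) + C) ** A = B ** A + C ** A"
  by (simp add: matrix_matrix_mult_def vec_eq_iff sum.distrib algebra_simps)

lemma group_inverse_unique:
  fixes A X Y :: "real^'n^'n"
  assumes "is_group_inverse A X" "is_group_inverse A Y"
  shows "X = Y"
proof -
  have x: "A ** X ** A = A" "X ** A ** X = X" "A ** X = X ** A" using assms(1) is_group_inverse_def by auto
  have y: "A ** Y ** A = A" "Y ** A ** Y = Y" "A ** Y = Y ** A" using assms(2) is_group_inverse_def by auto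
  have "X ** A = X ** (A ** Y ** A)" using y by simp
  also have "\<dots> = (X ** A) ** (Y ** A)" by (simp add: matrix_mul_assoc)
  finally have e1: "X ** A = (X ** A) ** (A ** Y)" using y by simp
  have "A ** Y = (A ** X ** A) ** Y" using x by simp
  also have "\<dots> = (X ** A) ** (A ** Y)" using x by (simp add: matrix_mul_assoc)
  finally have e2: "A ** Y = (X ** A) ** (A ** Y)" .
  have E: "X ** A = A ** Y" using e1 e2 by simp
  have "X = X ** A ** X" using x by simp
  also have "\<dots> = X ** (A ** X)" by (simp add: matrix_mul_assoc)
  also have "\<dots> = X ** (A ** Y)" using E x by simp
  also have "\<dots> = (A ** Y) ** Y" using E by (simp add: matrix_mul_assoc)
  also have "\<dots> = Y ** A ** Y" using y by simp
  finally show ?thesis using y by simp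
qed

lemma group_inverse_alg:
  fixes A L K D :: "real^'n^'n"
  assumes LK: "L + K = mat 1" and KL: "K ** L = 0" and LL: "L ** L = L"
    and KD: "K ** D = D" and DK: "D ** K = D" and LD: "L ** D = 0"
    and F1: "D ** A ** L ** A = K" and F2: "A ** L ** A ** D = K" and F3: "L ** A ** L = 0"
  defines "X \<equiv> L ** A ** D + D ** A ** L - L ** A ** D ** A ** D ** A ** L"
  shows "is_group_inverse A X"
proof -
  have K: "K = mat 1 - L" using LK by (simp add: algebra_simps)
  have AX: "A ** X = K + L ** A ** D ** A ** L"
  proof -
    have "A ** X = A ** L ** A ** D + A ** D ** A ** L - A ** L ** A ** D ** A ** D ** A ** L"
      unfolding X_def by (simp add: matrix_add_ldistrib matrix_sub_ldistrib matrix_mul_assoc)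
    also have "\<dots> = K + A ** D ** A ** L - K ** A ** D ** A ** L"
      using F2 by (simp add: matrix_mul_assoc)
    also have "\<dots> = K + L ** A ** D ** A ** L"
      unfolding K by (simp add: matrix_sub_rdistrib matrix_mul_assoc)
    finally show ?thesis .
  qed
  have XA: "X ** A = K + L ** A ** D ** A ** L"
  proof -
    have "X ** A = L ** A ** D ** A + D ** A ** L ** A - L ** A ** D ** A ** D ** A ** L ** A"
      unfolding X_def by (simp add: matrix_add_rdistrib' matrix_sub_rdistrib matrix_mul_assoc)
    also have "\<dots> = L ** A ** D ** A + K - L ** A ** D ** A ** K"
    proof -
      have "L ** A ** D ** A ** D ** A ** L ** A = L ** A ** D ** A ** (D ** A ** L ** A)"
        by (simp add: matrix_mul_assoc)
      then show ?thesis using F1 by simp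
    qed
    also have "\<dots> = K + L ** A ** D ** A ** L"
      unfolding K by (simp add: matrix_sub_ldistrib matrix_mul_assoc)
    finally show ?thesis .
  qed
  have LAK: "L ** A ** K = L ** A"
    using F3 unfolding K by (simp add: matrix_sub_ldistrib)
  have AXA: "A ** X ** A = A"
  proof -
    have "A ** X ** A = K ** A + L ** A ** D ** A ** L ** A"
      unfolding AX by (simp add: matrix_add_rdistrib')
    also have "\<dots> = K ** A + L ** A ** K"
    proof -
      have "L ** A ** D ** A ** L ** A = L ** A ** (D ** A ** L ** A)"
        by (simp add: matrix_mul_assoc)
      then show ?thesis using F1 by simp
    qed
    also have "\<dots> = (L + K) ** A" using LAK by (simp add: matrix_add_rdistrib' add.commute)
    finally show ?thesis using LK by simp
  qed
  have XAX: "X ** A ** X = X"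
  proof -
    have KX: "K ** X = D ** A ** L"
    proof -
      have "K ** X = K ** L ** A ** D + K ** D ** A ** L - K ** L ** A ** D ** A ** D ** A ** L"
        unfolding X_def by (simp add: matrix_add_ldistrib matrix_sub_ldistrib matrix_mul_assoc)
      then show ?thesis using KL KD by simp
    qed
    have M1: "L ** A ** D ** A ** L ** (L ** A ** D) = L ** A ** D"
    proof -
      have "L ** A ** D ** A ** L ** (L ** A ** D) = L ** A ** D ** (A ** (L ** L) ** A ** D)"
        by (simp add: matrix_mul_assoc)
      also have "\<dots> = L ** A ** D ** K" using LL F2 by simp
      also have "\<dots> = L ** A ** (D ** K)" by (simp add: matrix_mul_assoc)
      finally show ?thesis using DK by simp
    qed
    have M2: "L ** A ** D ** A ** L ** (D ** A ** L) = 0"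
    proof -
      have "L ** A ** D ** A ** L ** (D ** A ** L) = L ** A ** D ** A ** (L ** D) ** A ** L"
        by (simp add: matrix_mul_assoc)
      then show ?thesis using LD by simp
    qed
    have M3: "L ** A ** D ** A ** L ** (L ** A ** D ** A ** D ** A ** L) = L ** A ** D ** A ** D ** A ** L"
    proof -
      have "L ** A ** D ** A ** L ** (L ** A ** D ** A ** D ** A ** L) = (L ** A ** D ** A ** L ** (L ** A ** D)) ** (A ** D ** A ** L)"
        by (simp add: matrix_mul_assoc)
      then show ?thesis using M1 by (simp add: matrix_mul_assoc)
    qed
    have "X ** A ** X = K ** X + L ** A ** D ** A ** L ** X"
      unfolding XA by (simp add: matrix_add_rdistrib')
    also have "L ** A ** D ** A ** L ** X = L ** A ** D - L ** A ** D ** A ** D ** A ** L"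
      unfolding X_def using M1 M2 M3 by (simp add: matrix_add_ldistrib matrix_sub_ldistrib)
    finally have "X ** A ** X = D ** A ** L + (L ** A ** D - L ** A ** D ** A ** D ** A ** L)"
      using KX by simp
    then show ?thesis unfolding X_def by (simp add: algebra_simps)
  qed
  show ?thesis unfolding is_group_inverse_def using AXA XAX AX XA by simp
qed



definition dg :: "('n \<Rightarrow> real) \<Rightarrow> real^'n^'n" where
  "dg f = (\<chi> i j. if i = j then f i else 0)"

lemma if0_mult: "(if b then x else 0) * (y::real) = (if b then x * y else 0)" by simp
lemma mult_if0: "(y::real) * (if b then x else 0) = (if b then y * x else 0)" by simp

lemma dg_left: "(dg f ** M) $ i $ j = f i * M $ i $ j"
proof -
  have "(dg f ** M) $ i $ j = (\<Sum>k\<in>UNIV. if i = k then f i * M $ k $ j else 0)"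
    by (simp add: matrix_matrix_mult_def dg_def if0_mult mult_if0 cong: if_cong)
  also have "\<dots> = f i * M $ i $ j" by (simp add: sum.delta)
  finally show ?thesis .
qed
lemma dg_right: "(M ** dg f) $ i $ j = M $ i $ j * f j"
proof -
  have "(M ** dg f) $ i $ j = (\<Sum>k\<in>UNIV. if k = j then M $ i $ j * f j else 0)"
    by (simp add: matrix_matrix_mult_def dg_def if0_mult mult_if0 cong: if_cong)
  also have "\<dots> = M $ i $ j * f j" by (simp add: sum.delta)
  finally show ?thesis .
qed
lemma dg_mult: "dg f ** dg g = dg (\<lambda>i. f i * g i)"
  by (simp add: vec_eq_iff dg_left) (simp add: dg_def)
lemma dg_add: "dg f + dg g = dg (\<lambda>i. f i + g i)"
  by (simp add: vec_eq_iff dg_def)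
lemma dg_one: "dg (\<lambda>_. 1) = mat 1"
  by (simp add: vec_eq_iff dg_def mat_def)
lemma dg_zero: "dg (\<lambda>_. 0) = 0"
  by (simp add: vec_eq_iff dg_def)
lemma dg_cong: "(\<And>i. f i = g i) \<Longrightarrow> dg f = dg g" by metis



lemma pendant_unique:
  fixes A :: "real^'n^'n"
  assumes "pendant A u" "adj A u j" "adj A u j'"
  shows "j = j'"
proof -
  have "card {j. adj A u j} = 1" using assms(1) unfolding pendant_def degree_def .
  then obtain x where "{j. adj A u j} = {x}" by (rule card_1_singletonE)
  then have "j \<in> {x}" "j' \<in> {x}" using assms(2,3) by (metis mem_Collect_eq)+
  then show ?thesis by simp
qed

lemma pendants_not_adj:
  fixes A :: "real^'n^'n"
  assumes T: "class_T A" and pu: "pendant A u" and pw: "pendant A w"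
  shows "\<not> adj A u w"
proof
  assume uw: "adj A u w"
  have sym: "adj A x y \<Longrightarrow> adj A y x" for x y
    using T unfolding class_T_def is_tree_def weighted_simple_graph_def adj_def by metis
  obtain v where v: "\<not> pendant A v" using T unfolding class_T_def by blast
  have conn: "(adj A)\<^sup>*\<^sup>* u v" using T unfolding class_T_def is_tree_def graph_connected_def by blast
  have "x \<in> {u, w}" if "(adj A)\<^sup>*\<^sup>* u x" for x
    using that
  proof (induction rule: rtranclp_induct)
    case base then show ?case by simp
  next
    case (step y z)
    show ?case
    proof (cases "y = u")
      case True
      then show ?thesis using pendant_unique[OF pu uw] step(2) by auto
    next
      case False
      then have "y = w" using step(3) by simp
      then show ?thesis using pendant_unique[OF pw sym[OF uw]] step(2) by auto
    qed
  qed
  from this[OF conn] v pu pw show False by auto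
qed



lemma sign_nonneg: "(P::real) \<ge> 0 \<Longrightarrow> (P \<noteq> 0 \<Longrightarrow> \<sigma> = 1) \<Longrightarrow> \<sigma> * P \<ge> 0"
  by (cases "P = 0") auto
lemma sign_nonpos: "(P::real) \<ge> 0 \<Longrightarrow> (P \<noteq> 0 \<Longrightarrow> \<sigma> = -1) \<Longrightarrow> \<sigma> * P \<le> 0"
  by (cases "P = 0") auto
lemma mm_entry: "(M ** N) $ i $ j = (\<Sum>m\<in>UNIV. M $ i $ m * N $ m $ j)"
  by (simp add: matrix_matrix_mult_def)

theorem theorem3p8:
  fixes A :: "real^'n^'n"
  assumes "class_T A"
    and "\<forall>i j. adj A i j \<longrightarrow> A $ i $ j > 0"
  shows "(\<exists>X. is_group_inverse A X) \<and>
         (\<exists>S. signature_matrix S \<and> nonneg_matrix (S ** group_inverse A ** S))"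
proof -
  note T = assms(1)
  have symA: "A $ i $ j = A $ j $ i" for i j
    using T unfolding class_T_def is_tree_def weighted_simple_graph_def by blast
  have sym: "adj A x y \<Longrightarrow> adj A y x" for x y using symA unfolding adj_def by metis
  have irr: "\<not> adj A x x" for x
    using T unfolding class_T_def is_tree_def weighted_simple_graph_def adj_def by blast
  have conn: "(adj A)\<^sup>*\<^sup>* x y" for x y
    using T unfolding class_T_def is_tree_def graph_connected_def by blast
  have nocyc: "\<nexists>vs. is_cycle A vs" using T unfolding class_T_def is_tree_def by blast
  have Ann: "A $ i $ j \<ge> 0" for i j
    using assms(2) unfolding adj_def by (metis less_eq_real_def)
  define l where "l i = (if pendant A i then 1 else 0::real)" for i
  define k where "k i = 1 - l i" for i
  define W where "W v = (\<Sum>u\<in>UNIV. A $ v $ u * l u * A $ u $ v)" for v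
  define d where "d v = (if pendant A v then 0 else 1 / W v)" for v
  have Wpos: "W v > 0" if nv: "\<not> pendant A v" for v
  proof -
    obtain j where j: "adj A v j" "pendant A j" using T nv unfolding class_T_def by blast
    have "A $ v $ j * l j * A $ j $ v > 0"
      using j assms(2) sym[OF j(1)] unfolding l_def by simp
    moreover have "A $ v $ u * l u * A $ u $ v \<ge> 0" for u
      using Ann unfolding l_def by simp
    ultimately show ?thesis unfolding W_def by (intro sum_pos2[where i=j]) auto
  qed
  have S0: "(\<Sum>u\<in>UNIV. A $ v $ u * l u * A $ u $ j) = 0" if "v \<noteq> j" for v j
  proof (rule sum.neutral, intro ballI)
    fix u
    show "A $ v $ u * l u * A $ u $ j = 0"
    proof (rule ccontr)
      assume "A $ v $ u * l u * A $ u $ j \<noteq> 0"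
      then have "adj A u v" "pendant A u" "adj A u j"
        using symA unfolding adj_def l_def by (auto split: if_splits)
      then show False using pendant_unique that by metis
    qed
  qed
  define L where "L = dg l"
  define K where "K = dg k"
  define D where "D = dg d"
  have LK: "L + K = mat 1" unfolding L_def K_def dg_add k_def dg_one[symmetric] by simp
  have KL: "K ** L = 0" unfolding L_def K_def dg_mult dg_zero[symmetric]
    by (rule dg_cong) (simp add: k_def l_def)
  have LL: "L ** L = L" unfolding L_def dg_mult
    by (rule dg_cong) (simp add: l_def)
  have KD: "K ** D = D" unfolding D_def K_def dg_mult
    by (rule dg_cong) (simp add: k_def l_def d_def)
  have DK: "D ** K = D" unfolding D_def K_def dg_mult
    by (rule dg_cong) (simp add: k_def l_def d_def)
  have LD: "L ** D = 0" unfolding D_def L_def dg_mult dg_zero[symmetric]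
    by (rule dg_cong) (simp add: l_def d_def)
  have F1: "D ** A ** L ** A = K"
  proof (simp add: vec_eq_iff, intro allI)
    fix v j
    have "(D ** A ** L ** A) $ v $ j = (\<Sum>u\<in>UNIV. d v * A $ v $ u * l u * A $ u $ j)"
      unfolding matrix_matrix_mult_def[of "D ** A ** L" A] by (simp add: D_def L_def dg_left dg_right)
    also have "\<dots> = d v * (\<Sum>u\<in>UNIV. A $ v $ u * l u * A $ u $ j)"
      by (simp add: sum_distrib_left mult.assoc)
    also have "\<dots> = K $ v $ j"
    proof (cases "v = j")
      case True
      then show ?thesis using Wpos[of v] l_def[of v]
        by (cases "pendant A v") (auto simp: K_def dg_def k_def d_def W_def[symmetric])
    next
      case False
      then show ?thesis using S0[OF False] unfolding K_def dg_def by simp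
    qed
    finally show "(D ** A ** L ** A) $ v $ j = K $ v $ j" .
  qed
  have F2: "A ** L ** A ** D = K"
  proof (simp add: vec_eq_iff, intro allI)
    fix v j
    have "(A ** L ** A ** D) $ v $ j = (\<Sum>u\<in>UNIV. A $ v $ u * l u * A $ u $ j) * d j"
      unfolding D_def dg_right unfolding matrix_matrix_mult_def[of "A ** L" A] by (simp add: L_def dg_right)
    also have "\<dots> = K $ v $ j"
    proof (cases "v = j")
      case True
      then show ?thesis using Wpos[of v] l_def[of v]
        by (cases "pendant A v") (auto simp: K_def dg_def k_def d_def W_def[symmetric])
    next
      case False
      then show ?thesis using S0[OF False] unfolding K_def dg_def by simp
    qed
    finally show "(A ** L ** A ** D) $ v $ j = K $ v $ j" .
  qed
  have F3: "L ** A ** L = 0"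
  proof (simp add: vec_eq_iff, intro allI)
    fix i j
    have "(L ** A ** L) $ i $ j = l i * A $ i $ j * l j" by (simp add: L_def dg_left dg_right)
    also have "\<dots> = 0" using pendants_not_adj[OF T, of i j] unfolding l_def adj_def by auto
    finally show "(L ** A ** L) $ i $ j = 0" .
  qed
  define X where "X \<equiv> L ** A ** D + D ** A ** L - L ** A ** D ** A ** D ** A ** L"
  have GI: "is_group_inverse A X"
    unfolding X_def by (rule group_inverse_alg[OF LK KL LL KD DK LD F1 F2 F3])
  have GX: "group_inverse A = X"
    unfolding group_inverse_def using GI group_inverse_unique by blast
  obtain c :: "'n \<Rightarrow> bool" where c: "\<forall>u v. adj A u v \<longrightarrow> c u \<noteq> c v"
    using tree_bipartite[OF sym irr conn nocyc] by blast
  define col where "col i = (if c i then 1 else -1::real)" for i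
  define s where "s i = (if pendant A i then - col i else col i)" for i
  have s1: "s i = 1 \<or> s i = -1" for i unfolding s_def col_def by auto
  have sgn1: "s i * s j = 1" if "pendant A i" "adj A i j" "\<not> pendant A j" for i j
  proof -
    have "c i \<noteq> c j" using c that by blast
    then show ?thesis using that by (cases "c i"; cases "c j") (auto simp: s_def col_def)
  qed
  have sgn2: "s i * s j = -1" if "pendant A i" "adj A i a" "adj A a b" "adj A b j" "pendant A j" for i j a b
  proof -
    have "c i \<noteq> c a" "c a \<noteq> c b" "c b \<noteq> c j" using c that by blast+
    then show ?thesis using that by (cases "c i"; cases "c j"; cases "c a") (auto simp: s_def col_def)
  qed
  have lnn: "l i \<ge> 0" for i unfolding l_def by simp
  have dnn: "d i \<ge> 0" for i unfolding d_def using Wpos[of i] by (auto simp: less_imp_le)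
  have RL: "(M ** L) $ i $ j = M $ i $ j * l j" for M i j unfolding L_def by (rule dg_right)
  have RD: "(M ** D) $ i $ j = M $ i $ j * d j" for M i j unfolding D_def by (rule dg_right)
  have LL': "(L ** M) $ i $ j = l i * M $ i $ j" for M i j unfolding L_def by (rule dg_left)
  have DL': "(D ** M) $ i $ j = d i * M $ i $ j" for M i j unfolding D_def by (rule dg_left)
  have T1: "(L ** A ** D) $ i $ j = l i * A $ i $ j * d j" for i j by (simp only: RD LL')
  have T2: "(D ** A ** L) $ i $ j = d i * A $ i $ j * l j" for i j by (simp only: RL DL')
  have T3: "(L ** A ** D ** A ** D ** A ** L) $ i $ j =
     (\<Sum>m\<in>UNIV. \<Sum>a\<in>UNIV. l i * A $ i $ a * d a * A $ a $ m * d m * A $ m $ j * l j)" for i j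
  proof -
    have "(L ** A ** D ** A ** D ** A ** L) $ i $ j = (L ** A ** D ** A ** D ** A) $ i $ j * l j"
      by (rule RL)
    also have "(L ** A ** D ** A ** D ** A) $ i $ j = (\<Sum>m\<in>UNIV. (L ** A ** D ** A ** D) $ i $ m * A $ m $ j)"
      by (rule mm_entry)
    also have "\<dots> = (\<Sum>m\<in>UNIV. (L ** A ** D ** A) $ i $ m * d m * A $ m $ j)"
      by (simp only: RD)
    also have "\<dots> = (\<Sum>m\<in>UNIV. (\<Sum>a\<in>UNIV. (L ** A ** D) $ i $ a * A $ a $ m) * d m * A $ m $ j)"
      by (simp only: mm_entry[of "L ** A ** D" A])
    also have "\<dots> = (\<Sum>m\<in>UNIV. (\<Sum>a\<in>UNIV. l i * A $ i $ a * d a * A $ a $ m) * d m * A $ m $ j)"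
      by (simp only: T1)
    finally show ?thesis by (simp add: sum_distrib_right mult.assoc)
  qed
  have SX: "nonneg_matrix (dg s ** X ** dg s)"
    unfolding nonneg_matrix_def
  proof (intro allI)
    fix i j
    define P1 where "P1 = l i * A $ i $ j * d j"
    define P2 where "P2 = d i * A $ i $ j * l j"
    define P3 where "P3 = (\<Sum>m\<in>UNIV. \<Sum>a\<in>UNIV. l i * A $ i $ a * d a * A $ a $ m * d m * A $ m $ j * l j)"
    have e: "(dg s ** X ** dg s) $ i $ j = s i * s j * P1 + s i * s j * P2 - s i * s j * P3"
      unfolding dg_right dg_left X_def P1_def P2_def P3_def
      by (simp add: T1 T2 T3 algebra_simps)
    have h1: "s i * s j * P1 \<ge> 0" unfolding P1_def
    proof (rule sign_nonneg)
      show "0 \<le> l i * A $ i $ j * d j" using lnn dnn Ann by simp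
      assume "l i * A $ i $ j * d j \<noteq> 0"
      then have "pendant A i" "adj A i j" "\<not> pendant A j"
        unfolding l_def adj_def d_def by (auto split: if_splits)
      then show "s i * s j = 1" by (rule sgn1)
    qed
    have h2: "s i * s j * P2 \<ge> 0" unfolding P2_def
    proof (rule sign_nonneg)
      show "0 \<le> d i * A $ i $ j * l j" using lnn dnn Ann by simp
      assume "d i * A $ i $ j * l j \<noteq> 0"
      then have "pendant A j" "adj A j i" "\<not> pendant A i"
        using symA unfolding l_def adj_def d_def by (auto split: if_splits)
      then have "s j * s i = 1" by (rule sgn1)
      then show "s i * s j = 1" by (simp add: mult.commute)
    qed
    have h3: "s i * s j * P3 \<le> 0" unfolding P3_def sum_distrib_left
    proof (intro sum_nonpos ballI)
      fix m a
      show "s i * s j * (l i * A $ i $ a * d a * A $ a $ m * d m * A $ m $ j * l j) \<le> 0"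
      proof (rule sign_nonpos)
        show "0 \<le> l i * A $ i $ a * d a * A $ a $ m * d m * A $ m $ j * l j"
          using lnn dnn Ann by simp
        assume "l i * A $ i $ a * d a * A $ a $ m * d m * A $ m $ j * l j \<noteq> 0"
        then have "pendant A i" "adj A i a" "adj A a m" "adj A m j" "pendant A j"
          unfolding l_def adj_def by (auto split: if_splits)
        then show "s i * s j = -1" by (rule sgn2)
      qed
    qed
    show "(dg s ** X ** dg s) $ i $ j \<ge> 0" unfolding e using h1 h2 h3 by linarith
  qed
  have sig: "signature_matrix (dg s)"
    unfolding signature_matrix_def dg_def using s1 by simp
  show ?thesis using GI GX SX sig by blast
qed

end
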